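(* Let $E_1,\dots,E_m$ be mutually independent events on a probability space, let $p_i=\mathbf P(E_i)$, and assume $p_1\ge p_2\ge\dots\ge p_m$. Fix real numbers $0<a<b$ and define random variables $X_i=b$ on $E_i$ and $X_i=a$ on $E_i^c$. For a nonempty $\mathcal S\subseteq[m]$ define $$V(\mathcal S)=\mathbf E\Big[\ln\Big(\frac{1}{|\mathcal S|}\sum_{i\in\mathcal S}X_i\Big)\Big].$$ Then, for $1\le k\le m$, the set $[k]=\{1,\dots,k\}$ (the indices with the $k$ largest $p_i$) maximizes $V(\mathcal S)$ over all $\mathcal S\subseteq[m]$ with $|\mathcal S|=k$.
   Context: $V$ is the expected log-return of an equally weighted portfolio $\mathcal S$; a maximizer over $k$-element subsets is called a log-optimal portfolio. *)

theory Defs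
  imports "HOL-Probability.Probability"
begin

definition two_val :: "real \<Rightarrow> real \<Rightarrow> 'a set \<Rightarrow> 'a \<Rightarrow> real" where
  "two_val a b E \<omega> = (if \<omega> \<in> E then b else a)"

definition logret :: "'a measure \<Rightarrow> real \<Rightarrow> real \<Rightarrow> (nat \<Rightarrow> 'a set) \<Rightarrow> nat set \<Rightarrow> real" where
  "logret M a b E S =
     (\<integral>\<omega>. ln ((\<Sum>i\<in>S. two_val a b (E i) \<omega>) / real (card S)) \<partial>M)"

end

theory Submission
  imports Defs
begin

lemma two_val_meas:
  assumes "A \<in> sets M" shows "two_val a b A \<in> borel_measurable M"
  unfolding two_val_def[abs_def] by (rule measurable_If_set) (use assms in auto)

lemma two_val_vimage:
  assumes sub: "E \<subseteq> S"
  shows "two_val a b E -` A \<inter> S \<in> {{}, E, S - E, S}"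
proof (cases "a \<in> A")
  case True
  show ?thesis
  proof (cases "b \<in> A")
    case True
    have "two_val a b E -` A \<inter> S = S" using \<open>a \<in> A\<close> True unfolding two_val_def by auto
    then show ?thesis by simp
  next
    case False
    have "two_val a b E -` A \<inter> S = S - E" using \<open>a \<in> A\<close> False unfolding two_val_def by auto
    then show ?thesis by simp
  qed
next
  case aF: False
  show ?thesis
  proof (cases "b \<in> A")
    case True
    have "two_val a b E -` A \<inter> S = E" using aF True sub unfolding two_val_def by auto
    then show ?thesis by simp
  next
    case False
    have "two_val a b E -` A \<inter> S = {}" using aF False unfolding two_val_def by auto
    then show ?thesis by simp
  qed
qed

lemma (in prob_space) indep_two_val:
  assumes ind: "indep_events E I"
  shows "indep_vars (\<lambda>_. borel) (\<lambda>i. two_val a b (E i)) I"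
  unfolding indep_vars_def
proof (intro conjI ballI)
  have ev: "\<And>i. i \<in> I \<Longrightarrow> E i \<in> events" using ind by (simp add: indep_events_def image_subset_iff)
  fix i assume "i \<in> I" then show "random_variable borel (two_val a b (E i))"
    using ev two_val_meas by blast
next
  have ev: "\<And>i. i \<in> I \<Longrightarrow> E i \<in> events" using ind by (simp add: indep_events_def image_subset_iff)
  have i1: "indep_sets (\<lambda>i. {E i}) I" using ind by (simp add: indep_events_def_alt)
  have "indep_sets (\<lambda>i. sigma_sets (space M) {E i}) I"
    by (rule indep_sets_sigma[OF i1]) (simp add: Int_stable_def)
  then show "indep_sets (\<lambda>i. sigma_sets (space M) {two_val a b (E i) -` A \<inter> space M |A. A \<in> sets borel}) I"
  proof (rule indep_sets_mono_sets)
    fix i assume i: "i \<in> I"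
    have sub: "E i \<subseteq> space M" using ev[OF i] sets.sets_into_space by blast
    have e: "{} \<in> sigma_sets (space M) {E i}" by (rule sigma_sets.Empty)
    have b: "E i \<in> sigma_sets (space M) {E i}" by (rule sigma_sets.Basic) simp
    have cp: "space M - E i \<in> sigma_sets (space M) {E i}" by (rule sigma_sets.Compl) (rule b)
    have t: "space M \<in> sigma_sets (space M) {E i}" by (rule sigma_sets_top)
    show "sigma_sets (space M) {two_val a b (E i) -` A \<inter> space M |A. A \<in> sets borel}
       \<subseteq> sigma_sets (space M) {E i}"
    proof (rule sigma_sets_mono)
      show "{two_val a b (E i) -` A \<inter> space M |A. A \<in> sets borel} \<subseteq> sigma_sets (space M) {E i}"
      proof
        fix x assume "x \<in> {two_val a b (E i) -` A \<inter> space M |A. A \<in> sets borel}"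
        then obtain A where x: "x = two_val a b (E i) -` A \<inter> space M" by blast
        have "x \<in> {{}, E i, space M - E i, space M}" unfolding x by (rule two_val_vimage[OF sub])
        then show "x \<in> sigma_sets (space M) {E i}" using e b cp t by blast
      qed
    qed
  qed
qed

lemma ln_abs_bound:
  fixes x lo hi :: real
  assumes "0 < lo" "lo \<le> x" "x \<le> hi"
  shows "\<bar>ln x\<bar> \<le> \<bar>ln lo\<bar> + \<bar>ln hi\<bar>"
proof -
  have "ln lo \<le> ln x" using assms by simp
  moreover have "ln x \<le> ln hi" using assms by simp
  ultimately show ?thesis by linarith
qed

lemma (in prob_space) swap_formula:
  fixes c :: real
  assumes ind: "indep_vars (\<lambda>_. borel) (\<lambda>l. two_val a b (E l)) (insert i T)"
    and fin: "finite T" and iT: "i \<notin> T"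
    and ev: "\<And>l. l \<in> insert i T \<Longrightarrow> E l \<in> events"
    and ab: "0 < a" "a < b" and c: "0 < c"
  defines "g \<equiv> \<lambda>\<omega>. \<Sum>l\<in>T. two_val a b (E l) \<omega>"
  shows "(\<integral>\<omega>. ln ((\<Sum>l\<in>insert i T. two_val a b (E l) \<omega>) / c) \<partial>M)
     = (\<integral>\<omega>. ln ((g \<omega> + a) / c) \<partial>M) + prob (E i) * (\<integral>\<omega>. ln ((g \<omega> + b) / c) - ln ((g \<omega> + a) / c) \<partial>M)"
proof -
  have gm: "g \<in> borel_measurable M" unfolding g_def
    by (intro borel_measurable_sum two_val_meas ev) auto
  have g0: "0 \<le> g \<omega>" for \<omega> unfolding g_def
    using ab by (intro sum_nonneg) (auto simp: two_val_def)
  have gb: "g \<omega> \<le> real (card T) * b" for \<omega>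
  proof -
    have "g \<omega> \<le> (\<Sum>l\<in>T. b)" unfolding g_def
      using ab by (intro sum_mono) (auto simp: two_val_def)
    then show ?thesis by simp
  qed
  define B where "B = \<bar>ln (a / c)\<bar> + \<bar>ln ((real (card T) * b + b) / c)\<bar>"
  have bnd: "\<bar>ln ((g \<omega> + d) / c)\<bar> \<le> B" if "d = a \<or> d = b" for \<omega> d
    unfolding B_def
  proof (rule ln_abs_bound)
    show "0 < a / c" using ab c by simp
    show "a / c \<le> (g \<omega> + d) / c" using that g0[of \<omega>] ab c by (auto intro: divide_right_mono)
    show "(g \<omega> + d) / c \<le> (real (card T) * b + b) / c" using that gb[of \<omega>] ab c by (auto intro: divide_right_mono)
  qed
  have intd: "integrable M (\<lambda>\<omega>. ln ((g \<omega> + d) / c))" if "d = a \<or> d = b" for d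
    by (rule integrable_const_bound[where B=B]) (use bnd[OF that] gm in auto)
  let ?Fa = "\<lambda>\<omega>. ln ((g \<omega> + a) / c)"
  let ?D = "\<lambda>\<omega>. ln ((g \<omega> + b) / c) - ln ((g \<omega> + a) / c)"
  have intD: "integrable M ?D" using intd by auto
  have pw: "ln ((\<Sum>l\<in>insert i T. two_val a b (E l) \<omega>) / c) = ?Fa \<omega> + indicator (E i) \<omega> * ?D \<omega>" for \<omega>
    using fin iT by (simp add: g_def two_val_def indicator_def add.commute)
  have iv: "indep_var borel (two_val a b (E i)) borel g"
    unfolding g_def by (rule indep_vars_sum[OF fin iT ind])
  have iv2: "indep_var borel ((\<lambda>x. if x = b then 1 else 0 :: real) \<circ> two_val a b (E i))
      borel ((\<lambda>y. ln ((y + b) / c) - ln ((y + a) / c)) \<circ> g)"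
    by (rule indep_var_compose[OF iv]) auto
  have e1: "((\<lambda>x. if x = b then 1 else 0 :: real) \<circ> two_val a b (E i)) = indicator (E i)"
    using ab by (auto simp: fun_eq_iff two_val_def indicator_def)
  have e2: "((\<lambda>y. ln ((y + b) / c) - ln ((y + a) / c)) \<circ> g) = ?D" by (simp add: comp_def)
  have iv3: "indep_var borel (indicator (E i) :: 'a \<Rightarrow> real) borel ?D"
    using iv2 unfolding e1 e2 .
  have evi: "E i \<in> events" using ev by auto
  have intI: "integrable M (indicator (E i) :: 'a \<Rightarrow> real)"
    using evi by (intro integrable_real_indicator) (auto simp: less_top[symmetric])
  have prodint: "(\<integral>\<omega>. indicator (E i) \<omega> * ?D \<omega> \<partial>M) = prob (E i) * (\<integral>\<omega>. ?D \<omega> \<partial>M)"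
    using indep_var_lebesgue_integral[OF iv3 intI intD] evi by simp
  have prodI: "integrable M (\<lambda>\<omega>. indicator (E i) \<omega> * ?D \<omega>)"
    using indep_var_integrable[OF iv3 intI intD] .
  have "(\<integral>\<omega>. ln ((\<Sum>l\<in>insert i T. two_val a b (E l) \<omega>) / c) \<partial>M)
      = (\<integral>\<omega>. ?Fa \<omega> + indicator (E i) \<omega> * ?D \<omega> \<partial>M)" by (simp only: pw)
  also have "\<dots> = (\<integral>\<omega>. ?Fa \<omega> \<partial>M) + (\<integral>\<omega>. indicator (E i) \<omega> * ?D \<omega> \<partial>M)"
    by (rule Bochner_Integration.integral_add) (use intd prodI in auto)
  finally show ?thesis using prodint by simp
qed

lemma (in prob_space) swap_le:
  assumes ind: "indep_events E {1..m}"
    and T: "T \<subseteq> {1..m}" and ij: "i \<in> {1..m}" "j \<in> {1..m}" "i \<notin> T" "j \<notin> T"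
    and p: "prob (E i) \<le> prob (E j)" and ab: "0 < a" "a < b"
  shows "logret M a b E (insert i T) \<le> logret M a b E (insert j T)"
proof -
  have fin: "finite T" using T finite_subset by blast
  have ev: "\<And>l. l \<in> {1..m} \<Longrightarrow> E l \<in> events" using ind by (auto simp: indep_events_def)
  have iv: "indep_vars (\<lambda>_. borel) (\<lambda>l. two_val a b (E l)) {1..m}"
    by (rule indep_two_val[OF ind])
  define c where "c = real (Suc (card T))"
  have c: "0 < c" unfolding c_def by simp
  define g where "g \<equiv> \<lambda>\<omega>. \<Sum>l\<in>T. two_val a b (E l) \<omega>"
  have F: "logret M a b E (insert l T) = (\<integral>\<omega>. ln ((g \<omega> + a) / c) \<partial>M) + prob (E l) * (\<integral>\<omega>. ln ((g \<omega> + b) / c) - ln ((g \<omega> + a) / c) \<partial>M)"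
    if l: "l \<in> {1..m}" "l \<notin> T" for l
  proof -
    have "logret M a b E (insert l T) = (\<integral>\<omega>. ln ((\<Sum>l\<in>insert l T. two_val a b (E l) \<omega>) / c) \<partial>M)"
      unfolding logret_def c_def using fin l by simp
    also have "\<dots> = (\<integral>\<omega>. ln ((g \<omega> + a) / c) \<partial>M) + prob (E l) * (\<integral>\<omega>. ln ((g \<omega> + b) / c) - ln ((g \<omega> + a) / c) \<partial>M)"
      unfolding g_def
      by (rule swap_formula[OF indep_vars_subset[OF iv] fin l(2) ev ab c]) (use T l in auto)
    finally show ?thesis .
  qed
  have g0: "0 \<le> g \<omega>" for \<omega> unfolding g_def
    using ab by (intro sum_nonneg) (auto simp: two_val_def)
  have D0: "0 \<le> (\<integral>\<omega>. ln ((g \<omega> + b) / c) - ln ((g \<omega> + a) / c) \<partial>M)"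
  proof (rule Bochner_Integration.integral_nonneg)
    fix \<omega>
    have "0 < (g \<omega> + a) / c" using g0[of \<omega>] ab c by simp
    moreover have "(g \<omega> + a) / c \<le> (g \<omega> + b) / c" using ab c by (simp add: divide_right_mono)
    ultimately show "0 \<le> ln ((g \<omega> + b) / c) - ln ((g \<omega> + a) / c)" by simp
  qed
  show ?thesis using F[OF ij(1,3)] F[OF ij(2,4)] mult_right_mono[OF p D0] by simp
qed

lemma (in prob_space) main_ind:
  assumes ind: "indep_events E {1..m}"
    and mono: "\<And>i j. 1 \<le> i \<Longrightarrow> i \<le> j \<Longrightarrow> j \<le> m \<Longrightarrow> prob (E j) \<le> prob (E i)"
    and ab: "0 < a" "a < b" and k: "k \<le> m"
  shows "\<forall>S. S \<subseteq> {1..m} \<and> card S = k \<and> card (S - {1..k}) = n \<longrightarrow> logret M a b E S \<le> logret M a b E {1..k}"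
proof (induction n rule: less_induct)
  case (less n)
  show ?case
  proof (intro allI impI)
    fix S assume S: "S \<subseteq> {1..m} \<and> card S = k \<and> card (S - {1..k}) = n"
    have finS: "finite S" using S finite_subset by blast
    show "logret M a b E S \<le> logret M a b E {1..k}"
    proof (cases "n = 0")
      case True
      then have "S \<subseteq> {1..k}" using S finS by auto
      then have "S = {1..k}" using S by (intro card_seteq) auto
      then show ?thesis by simp
    next
      case False
      then obtain i where i: "i \<in> S" "i \<notin> {1..k}" using S by (metis Diff_iff all_not_in_conv card.empty)
      have "card ({1..k} - S) = card {1..k} - card ({1..k} \<inter> S)" by (rule card_Diff_subset_Int) auto
      also have "\<dots> = card S - card (S \<inter> {1..k})" using S by (simp add: Int_commute)
      also have "\<dots> = card (S - {1..k})" using finS by (simp add: card_Diff_subset_Int)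
      finally have "card ({1..k} - S) = n" using S by simp
      then obtain j where j: "j \<in> {1..k}" "j \<notin> S" using False by (metis Diff_iff all_not_in_conv card.empty)
      define T where "T = S - {i}"
      have ST: "S = insert i T" "i \<notin> T" "j \<notin> T" using i j unfolding T_def by auto
      have im: "i \<in> {1..m}" "j \<in> {1..m}" using i j S k by auto
      have "j \<le> i" using i j im by auto
      then have p: "prob (E i) \<le> prob (E j)" using mono[of j i] im by auto
      have T: "T \<subseteq> {1..m}" using S unfolding T_def by auto
      have le1: "logret M a b E S \<le> logret M a b E (insert j T)"
        unfolding ST(1) by (rule swap_le[OF ind T im ST(2,3) p ab])
      have finT: "finite T" using finS T_def by auto
      have c: "card (insert j T) = k" using S ST finT by simp
      have d: "insert j T - {1..k} = (S - {1..k}) - {i}" using ST j by auto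
      have "card (insert j T - {1..k}) < n" unfolding d using S i finS
        by (metis Diff_iff card_Diff1_less finite_Diff)
      moreover have "insert j T \<subseteq> {1..m}" using T im by auto
      ultimately have "logret M a b E (insert j T) \<le> logret M a b E {1..k}"
        using less c by blast
      then show ?thesis using le1 by linarith
    qed
  qed
qed

theorem theorem4:
  fixes M :: "'a measure" and E :: "nat \<Rightarrow> 'a set" and m k :: nat and a b :: real
  assumes "prob_space M"
    and "\<And>i. i \<in> {1..m} \<Longrightarrow> E i \<in> sets M"
    and "prob_space.indep_events M E {1..m}"
    and "\<And>i j. 1 \<le> i \<Longrightarrow> i \<le> j \<Longrightarrow> j \<le> m \<Longrightarrow> measure M (E j) \<le> measure M (E i)"
    and "0 < a" and "a < b"
    and "1 \<le> k" and "k \<le> m"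
  shows "\<forall>S. S \<subseteq> {1..m} \<and> card S = k \<longrightarrow> logret M a b E S \<le> logret M a b E {1..k}"
proof -
  interpret prob_space M by (rule assms(1))
  show ?thesis
    using main_ind[OF assms(3) assms(4) assms(5,6,8)] by blast
qed

end
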